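(* Let $(G,\lambda^{\bullet},\mu^{(0)})$ and $(H,\eta^{\bullet},\nu^{(0)})$ be Haar groupoids and let $p:G\to H$ be a homomorphism of Haar groupoids. Denote also by $p$ its restriction $G^{(0)}\to H^{(0)}$. Then $p_*(\mu^{(0)})\sim\nu^{(0)}$, i.e. for every Borel $E\subseteq H^{(0)}$, $\mu^{(0)}(p^{-1}(E))=0$ if and only if $\nu^{(0)}(E)=0$.
   Context: For a groupoid $G$, $G^{(0)}$ is its unit space, $r,d$ its range and source maps, $G^u=r^{-1}(u)$. A system of measures on a Borel map $\pi:X\to Y$ is a family $\{\lambda^y\}_{y\in Y}$ of positive Borel measures on $X$ with $\lambda^y$ concentrated on $\pi^{-1}(y)$. A continuous left Haar system on $G$ is a system of measures $\lambda^\bullet$ on $r:G\to G^{(0)}$ that is continuous ($u\mapsto\int f\,d\lambda^u$ continuous for every continuous compactly supported $f\ge0$), left invariant ($\lambda^{d(x)}(E)=\lambda^{r(x)}(x\cdot(E\cap G^{d(x)}))$ for all $x\in G$, Borel $E$), and positive on open sets ($\lambda^u(A)>0$ for open $A$ meeting $G^u$). Given a Radon measure $\mu^{(0)}$ on $G^{(0)}$, the induced measure is $\mu(E)=\int_{G^{(0)}}\lambda^u(E)\,d\mu^{(0)}(u)$; $\mu^{(0)}$ is quasi-invariant if $\mu\sim\mu^{-1}$ (mutually absolutely continuous), where $\mu^{-1}(E)=\mu(E^{-1})$. A Haar groupoid $(G,\lambda^\bullet,\mu^{(0)})$ is a second countable, locally compact, Hausdorff topological groupoid with a continuous left Haar system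 $\lambda^\bullet$ and a non-zero quasi-invariant Radon measure $\mu^{(0)}$ on $G^{(0)}$. A homomorphism of Haar groupoids $p:(G,\lambda^\bullet,\mu^{(0)})\to(H,\eta^\bullet,\nu^{(0)})$ is a continuous groupoid homomorphism with $p_*(\mu)\sim\nu$, where $\mu,\nu$ are the induced measures and $p_*\mu(E)=\mu(p^{-1}(E))$. *)

theory Defs
  imports "HOL-Analysis.Analysis"
begin

text \<open>A groupoid whose set of arrows is the whole type 'a, given by range r,
 source d, partial multiplication m (meaningful on composable pairs d x = r y)
 and inversion i.\<close>
definition groupoid :: "('a \<Rightarrow> 'a) \<Rightarrow> ('a \<Rightarrow> 'a) \<Rightarrow> ('a \<Rightarrow> 'a \<Rightarrow> 'a) \<Rightarrow> ('a \<Rightarrow> 'a) \<Rightarrow> bool" where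
  "groupoid r d m i \<longleftrightarrow>
     (\<forall>x. r (r x) = r x \<and> d (r x) = r x \<and> r (d x) = d x \<and> d (d x) = d x) \<and>
     (\<forall>x y. d x = r y \<longrightarrow> r (m x y) = r x \<and> d (m x y) = d y) \<and>
     (\<forall>x y z. d x = r y \<and> d y = r z \<longrightarrow> m (m x y) z = m x (m y z)) \<and>
     (\<forall>x. m (r x) x = x \<and> m x (d x) = x) \<and>
     (\<forall>x. r (i x) = d x \<and> d (i x) = r x \<and> m x (i x) = r x \<and> m (i x) x = d x)"

definition gunits :: "('a \<Rightarrow> 'a) \<Rightarrow> 'a set" where
  "gunits r = range r"

definition lc_topological_groupoid ::
  "('a::{t2_space,second_countable_topology} \<Rightarrow> 'a) \<Rightarrow> ('a \<Rightarrow> 'a) \<Rightarrow> ('a \<Rightarrow> 'a \<Rightarrow> 'a) \<Rightarrow> ('a \<Rightarrow> 'a) \<Rightarrow> bool" where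
  "lc_topological_groupoid r d m i \<longleftrightarrow>
     groupoid r d m i \<and>
     locally_compact_space (euclidean :: 'a topology) \<and>
     continuous_on UNIV r \<and> continuous_on UNIV d \<and> continuous_on UNIV i \<and>
     continuous_on {(x, y). d x = r y} (\<lambda>(x, y). m x y)"

definition Cc_nonneg :: "('a::topological_space \<Rightarrow> real) set" where
  "Cc_nonneg = {f. continuous_on UNIV f \<and> compact (closure {x. f x \<noteq> 0}) \<and> (\<forall>x. 0 \<le> f x)}"

definition continuous_left_haar_system ::
  "('a::{t2_space,second_countable_topology} \<Rightarrow> 'a) \<Rightarrow> ('a \<Rightarrow> 'a) \<Rightarrow> ('a \<Rightarrow> 'a \<Rightarrow> 'a) \<Rightarrow> ('a \<Rightarrow> 'a measure) \<Rightarrow> bool" where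
  "continuous_left_haar_system r d m lam \<longleftrightarrow>
     \<comment> \<open>system of positive Borel measures on r, lam u concentrated on r^-1(u)\<close>
     (\<forall>u\<in>gunits r. sets (lam u) = sets borel \<and> emeasure (lam u) (UNIV - r -` {u}) = 0) \<and>
     \<comment> \<open>continuity\<close>
     (\<forall>f\<in>Cc_nonneg.
        (\<forall>u\<in>gunits r. (\<integral>\<^sup>+ x. ennreal (f x) \<partial>lam u) < \<infinity>) \<and>
        continuous_on (gunits r) (\<lambda>u. enn2real (\<integral>\<^sup>+ x. ennreal (f x) \<partial>lam u))) \<and>
     \<comment> \<open>left invariance\<close>
     (\<forall>x. \<forall>E\<in>sets borel.
        emeasure (lam (d x)) E = emeasure (lam (r x)) (m x ` (E \<inter> r -` {d x}))) \<and>
     \<comment> \<open>positivity on open sets\<close>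
     (\<forall>u\<in>gunits r. \<forall>A. open A \<and> A \<inter> r -` {u} \<noteq> {} \<longrightarrow> emeasure (lam u) A > 0)"

text \<open>Radon measure on the (closed) unit space, viewed as a Borel measure on G
 concentrated on G^(0): finite on compact sets, outer regular on Borel sets,
 inner regular on open sets.\<close>
definition radon_on :: "'a::topological_space set \<Rightarrow> 'a measure \<Rightarrow> bool" where
  "radon_on S M \<longleftrightarrow>
     sets M = sets borel \<and> emeasure M (UNIV - S) = 0 \<and>
     (\<forall>K. compact K \<longrightarrow> emeasure M K < \<infinity>) \<and>
     (\<forall>B\<in>sets borel. emeasure M B = (INF U\<in>{U. open U \<and> B \<subseteq> U}. emeasure M U)) \<and>
     (\<forall>U. open U \<longrightarrow> emeasure M U = (SUP K\<in>{K. compact K \<and> K \<subseteq> U}. emeasure M K))"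

definition induced_measure :: "('a \<Rightarrow> 'a measure) \<Rightarrow> 'a measure \<Rightarrow> 'a set \<Rightarrow> ennreal" where
  "induced_measure lam mu0 E = (\<integral>\<^sup>+ u. emeasure (lam u) E \<partial>mu0)"

text \<open>Quasi-invariance: mu and mu^-1 are mutually absolutely continuous
 (same null Borel sets), mu^-1(E) = mu(E^-1).\<close>
definition quasi_invariant :: "('a::topological_space \<Rightarrow> 'a) \<Rightarrow> ('a \<Rightarrow> 'a measure) \<Rightarrow> 'a measure \<Rightarrow> bool" where
  "quasi_invariant i lam mu0 \<longleftrightarrow>
     (\<forall>E\<in>sets borel. induced_measure lam mu0 E = 0 \<longleftrightarrow> induced_measure lam mu0 (i ` E) = 0)"

definition haar_groupoid ::
  "('a::{t2_space,second_countable_topology} \<Rightarrow> 'a) \<Rightarrow> ('a \<Rightarrow> 'a) \<Rightarrow> ('a \<Rightarrow> 'a \<Rightarrow> 'a) \<Rightarrow> ('a \<Rightarrow> 'a)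
    \<Rightarrow> ('a \<Rightarrow> 'a measure) \<Rightarrow> 'a measure \<Rightarrow> bool" where
  "haar_groupoid r d m i lam mu0 \<longleftrightarrow>
     lc_topological_groupoid r d m i \<and>
     continuous_left_haar_system r d m lam \<and>
     radon_on (gunits r) mu0 \<and> emeasure mu0 (gunits r) \<noteq> 0 \<and>
     quasi_invariant i lam mu0"

definition groupoid_hom ::
  "('a \<Rightarrow> 'a) \<Rightarrow> ('a \<Rightarrow> 'a) \<Rightarrow> ('a \<Rightarrow> 'a \<Rightarrow> 'a)
   \<Rightarrow> ('b \<Rightarrow> 'b) \<Rightarrow> ('b \<Rightarrow> 'b) \<Rightarrow> ('b \<Rightarrow> 'b \<Rightarrow> 'b) \<Rightarrow> ('a \<Rightarrow> 'b) \<Rightarrow> bool" where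
  "groupoid_hom r d m r' d' m' p \<longleftrightarrow>
     (\<forall>x y. d x = r y \<longrightarrow> d' (p x) = r' (p y) \<and> p (m x y) = m' (p x) (p y))"

definition haar_groupoid_hom ::
  "('a::{t2_space,second_countable_topology} \<Rightarrow> 'a) \<Rightarrow> ('a \<Rightarrow> 'a) \<Rightarrow> ('a \<Rightarrow> 'a \<Rightarrow> 'a) \<Rightarrow> ('a \<Rightarrow> 'a measure) \<Rightarrow> 'a measure
   \<Rightarrow> ('b::{t2_space,second_countable_topology} \<Rightarrow> 'b) \<Rightarrow> ('b \<Rightarrow> 'b) \<Rightarrow> ('b \<Rightarrow> 'b \<Rightarrow> 'b) \<Rightarrow> ('b \<Rightarrow> 'b measure) \<Rightarrow> 'b measure
   \<Rightarrow> ('a \<Rightarrow> 'b) \<Rightarrow> bool" where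
  "haar_groupoid_hom r d m lam mu0 r' d' m' eta nu0 p \<longleftrightarrow>
     continuous_on UNIV p \<and> groupoid_hom r d m r' d' m' p \<and>
     (\<forall>E\<in>sets borel. induced_measure lam mu0 (p -` E) = 0 \<longleftrightarrow> induced_measure eta nu0 E = 0)"

end

theory Submission
  imports Defs
begin

lemma bump:
  fixes u :: "'a::{t2_space,second_countable_topology}"
  assumes lc: "locally_compact_space (euclidean :: 'a topology)"
  obtains f :: "'a \<Rightarrow> real" where "f \<in> Cc_nonneg" "\<forall>x. f x \<le> 1" "f u = 1"
proof -
  have H: "Hausdorff_space (euclidean :: 'a topology)"
    unfolding Hausdorff_space_def by (simp add: separation_t2 disjnt_def)
  have cr: "completely_regular_space (euclidean :: 'a topology)"
    using locally_compact_regular_imp_completely_regular_space[OF lc] H by blast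
  obtain U where U: "open U" "compact (closure U)" "u \<in> U"
    using lc H unfolding locally_compact_space_compact_closure_of[OF disjI1[OF H]] by auto
  obtain f where f: "continuous_map euclidean (top_of_set {0..1::real}) f"
      "f ` (UNIV - U) \<subseteq> {0}" "f ` {u} \<subseteq> {1}"
    using Urysohn_completely_regular_compact_closed[of 0 1 euclidean "{u}" "UNIV - U"] cr U
    by (auto simp: disjnt_def closed_open)
  have cont: "continuous_on UNIV f"
    using f(1) by (simp add: continuous_map_in_subtopology)
  have rng: "\<forall>x. f x \<in> {0..1}"
    using f(1) by (auto simp: continuous_map_in_subtopology)
  have "{x. f x \<noteq> 0} \<subseteq> U" using f(2) by auto
  then have "closure {x. f x \<noteq> 0} \<subseteq> closure U" by (rule closure_mono)
  then have "compact (closure {x. f x \<noteq> 0})"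
    using U(2) compact_Int_closed[OF U(2) closed_closure, of "{x. f x \<noteq> 0}"] by (simp add: inf.absorb2)
  then have "f \<in> Cc_nonneg" using cont rng by (auto simp: Cc_nonneg_def)
  then show ?thesis using that rng f(3) by auto
qed

lemma null_iff:
  fixes r d :: "'a::{t2_space,second_countable_topology} \<Rightarrow> 'a"
  assumes hg: "haar_groupoid r d m i lam mu0" and A: "A \<in> sets borel" "A \<subseteq> gunits r"
  shows "emeasure mu0 A = 0 \<longleftrightarrow> induced_measure lam mu0 (r -` A) = 0"
proof -
  have H: "lc_topological_groupoid r d m i" "continuous_left_haar_system r d m lam" "radon_on (gunits r) mu0"
    using hg unfolding haar_groupoid_def by simp_all
  have grp: "groupoid r d m i" and cr: "continuous_on UNIV r"
    and lc: "locally_compact_space (euclidean :: 'a topology)"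
    using H(1) unfolding lc_topological_groupoid_def by simp_all
  have haar: "continuous_left_haar_system r d m lam" and rad: "radon_on (gunits r) mu0"
    using H by simp_all
  let ?G0 = "gunits r"
  have rr: "\<And>x. r (r x) = r x" using grp unfolding groupoid_def by simp
  have fixu: "\<And>u. u \<in> ?G0 \<Longrightarrow> r u = u" by (auto simp: gunits_def rr)
  have G0eq: "?G0 = {x. r x = x}" by (auto simp: gunits_def rr) (metis rangeI)
  have G0closed: "closed ?G0" unfolding G0eq using closed_Collect_eq[OF cr continuous_on_id] by simp
  have G0borel: "?G0 \<in> sets borel" by (simp add: G0closed borel_closed)
  have rmeas: "r \<in> borel_measurable borel" using borel_measurable_continuous_onI[OF cr] .
  have rA: "r -` A \<in> sets borel" using measurable_sets[OF rmeas A(1)] by simp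
  have setsmu: "sets mu0 = sets borel" and null_out: "emeasure mu0 (UNIV - ?G0) = 0"
    using rad by (auto simp: radon_on_def)
  have spacemu: "space mu0 = UNIV" using sets_eq_imp_space_eq[OF setsmu] by simp
  have "UNIV - ?G0 \<in> null_sets mu0" using null_out G0borel setsmu by (auto simp: null_sets_def)
  then have AE_G0: "AE u in mu0. u \<in> ?G0" using AE_not_in by fastforce
  have LS: "\<And>u. u \<in> ?G0 \<Longrightarrow> sets (lam u) = sets borel \<and> emeasure (lam u) (UNIV - r -` {u}) = 0"
    and cont: "\<And>f. f \<in> Cc_nonneg \<Longrightarrow> (\<forall>u\<in>?G0. (\<integral>\<^sup>+ x. ennreal (f x) \<partial>lam u) < \<infinity>) \<and>
        continuous_on ?G0 (\<lambda>u. enn2real (\<integral>\<^sup>+ x. ennreal (f x) \<partial>lam u))"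
    and pos: "\<And>u A. u \<in> ?G0 \<Longrightarrow> open A \<Longrightarrow> A \<inter> r -` {u} \<noteq> {} \<Longrightarrow> emeasure (lam u) A > 0"
    using haar unfolding continuous_left_haar_system_def by simp_all
  have fval: "emeasure (lam u) (r -` A) = indicator A u * emeasure (lam u) UNIV" if u: "u \<in> ?G0" for u
  proof -
    have sl: "sets (lam u) = sets borel" and nl: "emeasure (lam u) (UNIV - r -` {u}) = 0" using LS[OF u] by auto
    have sp: "space (lam u) = UNIV" using sets_eq_imp_space_eq[OF sl] by simp
    have ru: "r -` {u} \<in> sets borel" using measurable_sets[OF rmeas] by simp
    have N: "UNIV - r -` {u} \<in> null_sets (lam u)" using nl ru sl by (auto simp: null_sets_def)
    have eq1: "emeasure (lam u) (r -` {u}) = emeasure (lam u) UNIV"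
      using emeasure_Diff_null_set[OF N, of UNIV] sl by (simp add: Diff_Diff_Int)
    show ?thesis
    proof (cases "u \<in> A")
      case True
      have "emeasure (lam u) (r -` {u}) \<le> emeasure (lam u) (r -` A)"
        by (rule emeasure_mono) (use True rA sl in auto)
      moreover have "emeasure (lam u) (r -` A) \<le> emeasure (lam u) UNIV"
        by (rule emeasure_mono) (use sl sp in auto)
      ultimately show ?thesis using True eq1 by (simp add: antisym)
    next
      case False
      have "emeasure (lam u) (r -` A) \<le> emeasure (lam u) (UNIV - r -` {u})"
        by (rule emeasure_mono) (use False ru sl in auto)
      then show ?thesis using False nl by simp
    qed
  qed
  show ?thesis
  proof
    assume A0: "emeasure mu0 A = 0"
    have "A \<in> null_sets mu0" using A0 A setsmu by (auto simp: null_sets_def)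
    then have "AE u in mu0. u \<notin> A" using AE_not_in by blast
    with AE_G0 have "AE u in mu0. emeasure (lam u) (r -` A) = 0"
      by eventually_elim (simp add: fval)
    then show "induced_measure lam mu0 (r -` A) = 0"
      unfolding induced_measure_def by (simp add: nn_integral_cong_AE)
  next
    assume I0: "induced_measure lam mu0 (r -` A) = 0"
    define S where "S \<phi> = {v\<in>?G0. 0 < enn2real (\<integral>\<^sup>+ x. ennreal (\<phi> x) \<partial>lam v)}" for \<phi> :: "'a \<Rightarrow> real"
    define \<Phi> where "\<Phi> = {\<phi>::'a \<Rightarrow> real. \<phi> \<in> Cc_nonneg \<and> (\<forall>x. \<phi> x \<le> 1)}"
    have Sopen: "openin (top_of_set ?G0) (S \<phi>)" if "\<phi> \<in> Cc_nonneg" for \<phi>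
    proof -
      have "S \<phi> = ?G0 \<inter> (\<lambda>u. enn2real (\<integral>\<^sup>+ x. ennreal (\<phi> x) \<partial>lam u)) -` {0<..}"
        by (auto simp: S_def)
      then show ?thesis using continuous_openin_preimage_gen[OF conjunct2[OF cont[OF that]], of "{0<..}"]
        by simp
    qed
    have cover: "?G0 \<subseteq> \<Union>(S ` \<Phi>)"
    proof
      fix u assume u: "u \<in> ?G0"
      obtain f where f: "f \<in> Cc_nonneg" "\<forall>x. f x \<le> 1" "f u = 1" using bump[OF lc] by blast
      have sl: "sets (lam u) = sets borel" using LS[OF u] by auto
      have cf: "continuous_on UNIV f" using f(1) by (simp add: Cc_nonneg_def)
      define P where "P = {x. 1/2 < f x}"
      have Po: "open P" unfolding P_def using open_Collect_less[OF continuous_on_const cf] .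
      have "u \<in> P \<inter> r -` {u}" using f(3) fixu[OF u] by (simp add: P_def)
      then have Ppos: "emeasure (lam u) P > 0" using pos[OF u Po] by blast
      have "(\<integral>\<^sup>+ x. ennreal (1/2) * indicator P x \<partial>lam u) \<le> (\<integral>\<^sup>+ x. ennreal (f x) \<partial>lam u)"
      proof (rule nn_integral_mono)
        fix x
        show "ennreal (1/2) * indicator P x \<le> ennreal (f x)"
        proof (cases "x \<in> P")
          case True
          then have "ennreal (1/2) \<le> ennreal (f x)" by (intro ennreal_leI) (simp add: P_def)
          then show ?thesis using True by simp
        next
          case False
          then show ?thesis by simp
        qed
      qed
      moreover have "(\<integral>\<^sup>+ x. ennreal (1/2) * indicator P x \<partial>lam u) = ennreal (1/2) * emeasure (lam u) P"
        using Po sl by (intro nn_integral_cmult_indicator) auto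
      moreover have "ennreal (1/2) * emeasure (lam u) P > 0" using Ppos by (simp add: ennreal_zero_less_mult_iff del: ennreal_half)
      ultimately have "0 < (\<integral>\<^sup>+ x. ennreal (f x) \<partial>lam u)" by order
      moreover have "(\<integral>\<^sup>+ x. ennreal (f x) \<partial>lam u) < \<infinity>" using cont[OF f(1)] u by blast
      ultimately have "u \<in> S f" using u by (simp add: S_def enn2real_positive_iff)
      then show "u \<in> \<Union>(S ` \<Phi>)" using f by (auto simp: \<Phi>_def)
    qed
    obtain F' where F': "F' \<subseteq> S ` \<Phi>" "countable F'" "\<Union>F' = \<Union>(S ` \<Phi>)"
      using Lindelof_openin[of "S ` \<Phi>" ?G0] Sopen by (auto simp: \<Phi>_def)
    obtain \<Phi>' where \<Phi>': "countable \<Phi>'" "\<Phi>' \<subseteq> \<Phi>" "F' = S ` \<Phi>'"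
      using countable_subset_image[of F' S \<Phi>] F' by blast
    define h where "h \<phi> u = indicator ?G0 u *\<^sub>R enn2real (\<integral>\<^sup>+ x. ennreal (\<phi> x) \<partial>lam u)" for \<phi> u
    have hmeas: "h \<phi> \<in> borel_measurable mu0" if "\<phi> \<in> \<Phi>" for \<phi>
    proof -
      have "h \<phi> \<in> borel_measurable borel" unfolding h_def
        using borel_measurable_continuous_on_indicator[OF G0borel conjunct2[OF cont]] that
        by (auto simp: \<Phi>_def)
      then show ?thesis by (subst measurable_cong_sets[OF setsmu refl])
    qed
    have Ameas: "A \<in> sets mu0" using A setsmu by simp
    have zero: "AE u in mu0. indicator A u * ennreal (h \<phi> u) = 0" if ph: "\<phi> \<in> \<Phi>" for \<phi>
    proof -
      have "AE u in mu0. indicator A u * ennreal (h \<phi> u) \<le> emeasure (lam u) (r -` A)"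
        using AE_G0
      proof eventually_elim
        case (elim u)
        have sl: "sets (lam u) = sets borel" using LS[OF elim] by auto
        have sp: "space (lam u) = UNIV" using sets_eq_imp_space_eq[OF sl] by simp
        have phc: "\<phi> \<in> Cc_nonneg" using ph by (simp add: \<Phi>_def)
        have fin: "(\<integral>\<^sup>+ x. ennreal (\<phi> x) \<partial>lam u) < \<infinity>" using conjunct1[OF cont[OF phc]] elim by (rule bspec)
        have "ennreal (h \<phi> u) = (\<integral>\<^sup>+ x. ennreal (\<phi> x) \<partial>lam u)"
          using fin elim by (simp add: h_def)
        also have "\<dots> \<le> (\<integral>\<^sup>+ x. 1 \<partial>lam u)"
          by (rule nn_integral_mono) (use ph in \<open>auto simp: \<Phi>_def\<close>)
        also have "\<dots> = emeasure (lam u) UNIV" using sp by simp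
        finally have "ennreal (h \<phi> u) \<le> emeasure (lam u) UNIV" .
        then show ?case using fval[OF elim] by (cases "u \<in> A") auto
      qed
      then have "(\<integral>\<^sup>+ u. indicator A u * ennreal (h \<phi> u) \<partial>mu0) \<le> induced_measure lam mu0 (r -` A)"
        unfolding induced_measure_def by (rule nn_integral_mono_AE)
      then have "(\<integral>\<^sup>+ u. indicator A u * ennreal (h \<phi> u) \<partial>mu0) = 0" using I0 by simp
      moreover have "(\<lambda>u. indicator A u * ennreal (h \<phi> u)) \<in> borel_measurable mu0"
        using hmeas[OF ph] Ameas by (intro borel_measurable_times_ennreal borel_measurable_indicator measurable_compose[OF _ measurable_ennreal]) auto
      ultimately show ?thesis using nn_integral_0_iff_AE by blast
    qed
    have "AE u in mu0. \<forall>\<phi>\<in>\<Phi>'. indicator A u * ennreal (h \<phi> u) = 0"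
      by (subst AE_ball_countable[OF \<Phi>'(1)]) (use zero \<Phi>'(2) in blast)
    then have "AE u in mu0. u \<notin> A"
    proof eventually_elim
      case (elim u)
      show ?case
      proof
        assume uA: "u \<in> A"
        then have uG: "u \<in> ?G0" using A by blast
        have "u \<in> \<Union>(S ` \<Phi>')" using cover uG F'(3) unfolding \<Phi>'(3) by (rule_tac subsetD) auto
        then obtain \<phi> where ph: "\<phi> \<in> \<Phi>'" "u \<in> S \<phi>" by (rule UN_E)
        then have hp: "0 < h \<phi> u" using uG by (simp add: h_def S_def)
        have "indicator A u * ennreal (h \<phi> u) = 0" using elim ph(1) by (rule bspec)
        then show False using hp uA by simp
      qed
    qed
    then show "emeasure mu0 A = 0"
      using AE_iff_measurable[OF Ameas, of "\<lambda>u. u \<notin> A"] spacemu by auto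
  qed
qed


lemma gunits_borel:
  fixes r :: "'a::{t2_space,second_countable_topology} \<Rightarrow> 'a"
  assumes "haar_groupoid r d m i lam mu0"
  shows "gunits r \<in> sets borel" "r \<in> borel_measurable borel"
proof -
  have lt: "lc_topological_groupoid r d m i" using assms unfolding haar_groupoid_def by simp_all
  have grp: "groupoid r d m i" and cr: "continuous_on UNIV r"
    using lt unfolding lc_topological_groupoid_def by simp_all
  have rr: "\<And>x. r (r x) = r x" using grp unfolding groupoid_def by simp
  have G0eq: "gunits r = {x. r x = x}" by (auto simp: gunits_def rr) (metis rangeI)
  have "closed (gunits r)" unfolding G0eq using closed_Collect_eq[OF cr continuous_on_id] by simp
  then show "gunits r \<in> sets borel" by (simp add: borel_closed)
  show "r \<in> borel_measurable borel" using borel_measurable_continuous_onI[OF cr] .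
qed

lemma idem_unit:
  assumes grp: "groupoid r d m i" and c: "d y = r y" and y: "m y y = y"
  shows "y = d y"
proof -
  have g3: "\<And>x y z. d x = r y \<Longrightarrow> d y = r z \<Longrightarrow> m (m x y) z = m x (m y z)"
    and g4: "\<And>x. m (r x) x = x"
    and g5: "\<And>x. r (i x) = d x" "\<And>x. d (i x) = r x" "\<And>x. m (i x) x = d x"
    using grp unfolding groupoid_def by blast+
  have "d y = m (i y) y" using g5 by simp
  also have "\<dots> = m (i y) (m y y)" using y by simp
  also have "\<dots> = m (m (i y) y) y" using g3[of "i y" y y] g5 c by simp
  also have "\<dots> = m (d y) y" using g5 by simp
  also have "\<dots> = y" using c g4 by simp
  finally show ?thesis by simp
qed

theorem proposition2p11:
  fixes r d :: "'a::{t2_space,second_countable_topology} \<Rightarrow> 'a" and m :: "'a \<Rightarrow> 'a \<Rightarrow> 'a"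
    and i :: "'a \<Rightarrow> 'a" and lam :: "'a \<Rightarrow> 'a measure" and mu0 :: "'a measure"
    and r' d' :: "'b::{t2_space,second_countable_topology} \<Rightarrow> 'b" and m' :: "'b \<Rightarrow> 'b \<Rightarrow> 'b"
    and i' :: "'b \<Rightarrow> 'b" and eta :: "'b \<Rightarrow> 'b measure" and nu0 :: "'b measure"
    and p :: "'a \<Rightarrow> 'b"
  assumes "haar_groupoid r d m i lam mu0"
    and "haar_groupoid r' d' m' i' eta nu0"
    and "haar_groupoid_hom r d m lam mu0 r' d' m' eta nu0 p"
  shows "\<forall>E\<in>sets borel. E \<subseteq> gunits r' \<longrightarrow>
           (emeasure mu0 (p -` E \<inter> gunits r) = 0 \<longleftrightarrow> emeasure nu0 E = 0)"
proof (intro ballI impI)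
  fix E :: "'b set" assume E: "E \<in> sets borel" "E \<subseteq> gunits r'"
  have pc: "continuous_on UNIV p" and hom: "groupoid_hom r d m r' d' m' p"
    and hm: "\<forall>E\<in>sets borel. induced_measure lam mu0 (p -` E) = 0 \<longleftrightarrow> induced_measure eta nu0 E = 0"
    using assms(3) unfolding haar_groupoid_hom_def by simp_all
  have grp: "groupoid r d m i"
    using assms(1) unfolding haar_groupoid_def lc_topological_groupoid_def by simp_all
  have grp': "groupoid r' d' m' i'"
    using assms(2) unfolding haar_groupoid_def lc_topological_groupoid_def by simp_all
  have homr: "\<And>x y. d x = r y \<Longrightarrow> d' (p x) = r' (p y) \<and> p (m x y) = m' (p x) (p y)"
    using hom unfolding groupoid_hom_def by blast
  have rr: "\<And>x. r (r x) = r x" "\<And>x. d (r x) = r x" "\<And>x. m (r x) x = x"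
    using grp unfolding groupoid_def by simp_all
  have pr: "r' (p x) = p (r x)" for x
  proof -
    have h1: "d' (p (r x)) = r' (p x) \<and> p (m (r x) x) = m' (p (r x)) (p x)"
      using homr[of "r x" x] rr by simp
    have h2: "d' (p (r x)) = r' (p (r x)) \<and> p (m (r x) (r x)) = m' (p (r x)) (p (r x))"
      using homr[of "r x" "r x"] rr by simp
    have "m (r x) (r x) = r x" using rr(3)[of "r x"] rr(1) by simp
    then have "p (r x) = d' (p (r x))"
      using idem_unit[OF grp', of "p (r x)"] h2 by simp
    then show ?thesis using h1 by simp
  qed
  define A where "A = p -` E \<inter> gunits r"
  have pm: "p \<in> borel_measurable borel" using borel_measurable_continuous_onI[OF pc] .
  have Ab: "A \<in> sets borel" unfolding A_def
    using measurable_sets[OF pm E(1)] gunits_borel(1)[OF assms(1)] by auto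
  have AG: "A \<subseteq> gunits r" by (simp add: A_def)
  have rE: "r' -` E \<in> sets borel" using measurable_sets[OF gunits_borel(2)[OF assms(2)] E(1)] by simp
  have pre: "p -` (r' -` E) = r -` A" by (auto simp: A_def pr gunits_def)
  have "emeasure mu0 A = 0 \<longleftrightarrow> induced_measure lam mu0 (r -` A) = 0"
    by (rule null_iff[OF assms(1) Ab AG])
  also have "\<dots> \<longleftrightarrow> induced_measure eta nu0 (r' -` E) = 0"
    using hm rE pre by metis
  also have "\<dots> \<longleftrightarrow> emeasure nu0 E = 0"
    using null_iff[OF assms(2) E] by simp
  finally show "emeasure mu0 (p -` E \<inter> gunits r) = 0 \<longleftrightarrow> emeasure nu0 E = 0"
    by (simp add: A_def)
qed

end
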